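(* For every $n\ge1$, the maps $\varphi\colon\mathscr C_n(A)\to\mathscr G_n^{\mathrm{ext}}(A)$ are well defined (i.e. $\varphi(c)$ has no directed cycle of uniform weight) and form a lax morphism of operads: for $c\in\mathscr C_n(A)$, $d\in\mathscr C_n(B)$ and $a\in A$ one has $\varphi(c\circ_a d)\le\varphi(c)\circ_a\varphi(d)$ in $\mathscr G_n^{\mathrm{ext}}(A[B/a])$, and $\varphi$ commutes with relabelling along bijections.
   Context: $\mathscr C_n(A)$ (little $n$-cubes) is the space of families $c=(c_a)_{a\in A}$ of maps $c_a\colon(0,1)^n\to(0,1)^n$, $c_a(x)=u(a)\odot x+v(a)$ with $u(a)\in\mathbb R_{>0}^n$ ($\odot$ = coordinatewise product), whose images are pairwise disjoint; symmetric groups permute the indices and $c\circ_a d$ is obtained by composing the embeddings $d_b$ with $c_a$, i.e. $(c\circ_a d)_{a'}=c_{a'}$ for $a'\neq a$ and $(c\circ_a d)_b=c_a\circ d_b$. Put $w(a)=u(a)+v(a)$. Say $c_a$ is $i$-below $c_b$ if $w(a)_i\le v(b)_i$, and $c_a,c_b$ are $i$-separated if one is $i$-below the other. $\varphi(c)$ is the complete directed graph on $A$ in which the edge between $a\neq b$ has weight the smallest $i$ such that $c_a,c_b$ are $i$-separated, directed $a\to b$ iff $c_a$ is $i$-below $c_b$. Weighted complete directed graphs on $A$: each two-element subset $\{a,b\}$ carries exactly one directed edge with weight in $\{1,\dots,n\}$; order $g\le h$ iff whenever $a\xrightarrow{v}b$ in $g$, either $a\xrightarrow{w}b$ in $h$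 with $v\le w$ or $b\xrightarrow{w}a$ in $h$ with $v<w$. $\mathscr G_n^{\mathrm{ext}}(A)$ is the poset of such graphs with no directed cycle of uniform weight, with composition $g\circ_a h$ on $(A\setminus\{a\})\sqcup B$: edges among $A\setminus\{a\}$ as in $g$, among $B$ as in $h$, and between $a'\in A\setminus\{a\}$ and $b\in B$ as the edge between $a'$ and $a$ in $g$. *)

theory Defs
  imports Complex_Main
begin

text \<open>Points of R^n are functions nat => real, coordinates 1..n (value 0 elsewhere).
  A little cube is given by its data (u, v): c(x) = u (.) x + v.\<close>

type_synonym cube = "(nat \<Rightarrow> real) \<times> (nat \<Rightarrow> real)"

definition open_unit_cube :: "nat \<Rightarrow> (nat \<Rightarrow> real) set" where
  "open_unit_cube n = {x. (\<forall>i\<in>{1..n}. 0 < x i \<and> x i < 1) \<and> (\<forall>i. i \<notin> {1..n} \<longrightarrow> x i = 0)}"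

definition cube_map :: "nat \<Rightarrow> cube \<Rightarrow> (nat \<Rightarrow> real) \<Rightarrow> (nat \<Rightarrow> real)" where
  "cube_map n c x = (\<lambda>i. if i \<in> {1..n} then fst c i * x i + snd c i else 0)"

definition cube_image :: "nat \<Rightarrow> cube \<Rightarrow> (nat \<Rightarrow> real) set" where
  "cube_image n c = cube_map n c ` open_unit_cube n"

definition little_cubes :: "nat \<Rightarrow> 'a set \<Rightarrow> ('a \<Rightarrow> cube) \<Rightarrow> bool" where
  "little_cubes n A c \<longleftrightarrow>
     (\<forall>a\<in>A. (\<forall>i\<in>{1..n}. fst (c a) i > 0) \<and> cube_image n (c a) \<subseteq> open_unit_cube n) \<and>
     (\<forall>a\<in>A. \<forall>b\<in>A. a \<noteq> b \<longrightarrow> cube_image n (c a) \<inter> cube_image n (c b) = {})"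

definition cube_w :: "cube \<Rightarrow> nat \<Rightarrow> real" where
  "cube_w c i = fst c i + snd c i"

definition i_below :: "cube \<Rightarrow> cube \<Rightarrow> nat \<Rightarrow> bool" where
  "i_below ca cb i \<longleftrightarrow> cube_w ca i \<le> snd cb i"

definition i_separated :: "cube \<Rightarrow> cube \<Rightarrow> nat \<Rightarrow> bool" where
  "i_separated ca cb i \<longleftrightarrow> i_below ca cb i \<or> i_below cb ca i"

text \<open>Operadic composition c o_a d, indexed by (A - {a}) + B, encoded as Inl/Inr.\<close>
definition cube_compose :: "cube \<Rightarrow> cube \<Rightarrow> cube" where
  "cube_compose p q = ((\<lambda>i. fst p i * fst q i), (\<lambda>i. fst p i * snd q i + snd p i))"

definition cubes_comp :: "'a \<Rightarrow> ('a \<Rightarrow> cube) \<Rightarrow> ('b \<Rightarrow> cube) \<Rightarrow> ('a + 'b \<Rightarrow> cube)" where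
  "cubes_comp a c d = (\<lambda>x. case x of Inl a' \<Rightarrow> c a' | Inr b \<Rightarrow> cube_compose (c a) (d b))"

definition subst_index :: "'a set \<Rightarrow> 'a \<Rightarrow> 'b set \<Rightarrow> ('a + 'b) set" where
  "subst_index A a B = Inl ` (A - {a}) \<union> Inr ` B"

text \<open>Weighted complete directed graphs: g x y = w > 0 means an edge x -> y of weight w;
  g x y = 0 means no edge x -> y.\<close>
definition wcd_graph :: "nat \<Rightarrow> 'a set \<Rightarrow> ('a \<Rightarrow> 'a \<Rightarrow> nat) \<Rightarrow> bool" where
  "wcd_graph n A g \<longleftrightarrow>
     (\<forall>x y. (x \<notin> A \<or> y \<notin> A \<or> x = y) \<longrightarrow> g x y = 0) \<and>
     (\<forall>x\<in>A. \<forall>y\<in>A. x \<noteq> y \<longrightarrow>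
        ((g x y \<noteq> 0 \<and> g y x = 0) \<or> (g x y = 0 \<and> g y x \<noteq> 0)) \<and> g x y \<le> n)"

definition has_uniform_cycle :: "'a set \<Rightarrow> ('a \<Rightarrow> 'a \<Rightarrow> nat) \<Rightarrow> bool" where
  "has_uniform_cycle A g \<longleftrightarrow>
     (\<exists>xs i. xs \<noteq> [] \<and> i \<ge> 1 \<and> set xs \<subseteq> A \<and>
        (\<forall>j < length xs. g (xs ! j) (xs ! ((j + 1) mod length xs)) = i))"

definition graph_ext :: "nat \<Rightarrow> 'a set \<Rightarrow> ('a \<Rightarrow> 'a \<Rightarrow> nat) \<Rightarrow> bool" where
  "graph_ext n A g \<longleftrightarrow> wcd_graph n A g \<and> \<not> has_uniform_cycle A g"

definition graph_le :: "('a \<Rightarrow> 'a \<Rightarrow> nat) \<Rightarrow> ('a \<Rightarrow> 'a \<Rightarrow> nat) \<Rightarrow> bool" where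
  "graph_le g h \<longleftrightarrow> (\<forall>x y. g x y \<noteq> 0 \<longrightarrow> (g x y \<le> h x y \<or> g x y < h y x))"

definition graph_comp :: "'a \<Rightarrow> ('a \<Rightarrow> 'a \<Rightarrow> nat) \<Rightarrow> ('b \<Rightarrow> 'b \<Rightarrow> nat) \<Rightarrow> ('a + 'b \<Rightarrow> 'a + 'b \<Rightarrow> nat)" where
  "graph_comp a g h = (\<lambda>x y. case (x, y) of
       (Inl x', Inl y') \<Rightarrow> if x' \<noteq> a \<and> y' \<noteq> a then g x' y' else 0
     | (Inr x', Inr y') \<Rightarrow> h x' y'
     | (Inl x', Inr y') \<Rightarrow> if x' \<noteq> a then g x' a else 0
     | (Inr x', Inl y') \<Rightarrow> if y' \<noteq> a then g a y' else 0)"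

definition phi :: "nat \<Rightarrow> 'a set \<Rightarrow> ('a \<Rightarrow> cube) \<Rightarrow> ('a \<Rightarrow> 'a \<Rightarrow> nat)" where
  "phi n A c = (\<lambda>x y.
     if x \<in> A \<and> y \<in> A \<and> x \<noteq> y \<and> (\<exists>i\<in>{1..n}. i_separated (c x) (c y) i) then
       (let i = (LEAST i. i \<in> {1..n} \<and> i_separated (c x) (c y) i)
        in if i_below (c x) (c y) i then i else 0)
     else 0)"

definition relabel_cubes :: "('a \<Rightarrow> 'b) \<Rightarrow> 'a set \<Rightarrow> ('a \<Rightarrow> cube) \<Rightarrow> ('b \<Rightarrow> cube)" where
  "relabel_cubes f A c = (\<lambda>y. c (inv_into A f y))"

definition relabel_graph :: "('a \<Rightarrow> 'b) \<Rightarrow> 'a set \<Rightarrow> ('a \<Rightarrow> 'a \<Rightarrow> nat) \<Rightarrow> ('b \<Rightarrow> 'b \<Rightarrow> nat)" where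
  "relabel_graph f A g = (\<lambda>x y. if x \<in> f ` A \<and> y \<in> f ` A then g (inv_into A f x) (inv_into A f y) else 0)"

end

theory Submission
  imports Defs
begin

definition sepL :: "nat \<Rightarrow> cube \<Rightarrow> cube \<Rightarrow> nat" where
  "sepL n p q = (LEAST i. i \<in> {1..n} \<and> i_separated p q i)"

definition pv :: "nat \<Rightarrow> cube \<Rightarrow> cube \<Rightarrow> nat" where
  "pv n p q = (if \<exists>i\<in>{1..n}. i_separated p q i then
      (if i_below p q (sepL n p q) then sepL n p q else 0) else 0)"

definition good :: "nat \<Rightarrow> cube \<Rightarrow> bool" where
  "good n p \<longleftrightarrow> (\<forall>i\<in>{1..n}. fst p i > 0)"

lemma phi_pv: "phi n A c x y = (if x \<in> A \<and> y \<in> A \<and> x \<noteq> y then pv n (c x) (c y) else 0)"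
  unfolding phi_def pv_def sepL_def Let_def by auto

lemma sep_sym: "i_separated p q i = i_separated q p i"
  unfolding i_separated_def by auto

lemma sepL_sym: "sepL n p q = sepL n q p"
  unfolding sepL_def using sep_sym by metis

lemma sepL_props:
  assumes "\<exists>i\<in>{1..n}. i_separated p q i"
  shows "sepL n p q \<in> {1..n}" "i_separated p q (sepL n p q)"
    "\<And>j. j \<in> {1..n} \<Longrightarrow> i_separated p q j \<Longrightarrow> sepL n p q \<le> j"
proof -
  have ex: "\<exists>i. i \<in> {1..n} \<and> i_separated p q i" using assms by blast
  show "sepL n p q \<in> {1..n}" "i_separated p q (sepL n p q)"
    using LeastI_ex[OF ex] unfolding sepL_def by auto
  show "\<And>j. j \<in> {1..n} \<Longrightarrow> i_separated p q j \<Longrightarrow> sepL n p q \<le> j"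
    unfolding sepL_def by (rule Least_le) auto
qed

lemma below_both_False:
  assumes "good n p" "good n q" "i \<in> {1..n}" "i_below p q i" "i_below q p i"
  shows False
proof -
  have "fst p i > 0" "fst q i > 0" using assms(1-3) by (auto simp: good_def)
  then show False using assms(4,5) unfolding i_below_def cube_w_def by linarith
qed

lemma pv_nz:
  assumes "pv n p q \<noteq> 0"
  shows "\<exists>i\<in>{1..n}. i_separated p q i" "pv n p q = sepL n p q" "i_below p q (sepL n p q)"
  using assms unfolding pv_def by (auto split: if_splits)

lemma pv_one:
  assumes "good n p" "good n q" "\<exists>i\<in>{1..n}. i_separated p q i"
  shows "(pv n p q \<noteq> 0 \<and> pv n q p = 0) \<or> (pv n p q = 0 \<and> pv n q p \<noteq> 0)" "pv n p q \<le> n"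
proof -
  let ?j = "sepL n p q"
  have j: "?j \<in> {1..n}" "i_separated p q ?j" using sepL_props[OF assms(3)] by auto
  have ex2: "\<exists>i\<in>{1..n}. i_separated q p i" using assms(3) sep_sym by blast
  have s: "sepL n q p = ?j" using sepL_sym by metis
  have nb: "\<not> (i_below p q ?j \<and> i_below q p ?j)" using below_both_False assms(1,2) j(1) by blast
  show "(pv n p q \<noteq> 0 \<and> pv n q p = 0) \<or> (pv n p q = 0 \<and> pv n q p \<noteq> 0)"
    using j nb s assms(3) ex2 unfolding pv_def i_separated_def by auto
  show "pv n p q \<le> n" using j unfolding pv_def by auto
qed

lemma pv_lax:
  assumes gp: "good n p" and gq: "good n q"
    and ex': "\<exists>i\<in>{1..n}. i_separated p' q' i"
    and tr: "\<And>i. i \<in> {1..n} \<Longrightarrow> (i_below p' q' i \<longrightarrow> i_below p q i) \<and> (i_below q' p' i \<longrightarrow> i_below q p i)"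
    and nz: "pv n p q \<noteq> 0"
  shows "pv n p q \<le> pv n p' q' \<or> pv n p q < pv n q' p'"
proof -
  have ex: "\<exists>i\<in>{1..n}. i_separated p q i" and k: "pv n p q = sepL n p q"
    and kb: "i_below p q (sepL n p q)"
    using pv_nz[OF nz] by auto
  let ?k = "sepL n p q" let ?j = "sepL n p' q'"
  have k1: "?k \<in> {1..n}" using sepL_props(1)[OF ex] .
  have j: "?j \<in> {1..n}" "i_separated p' q' ?j" using sepL_props[OF ex'] by auto
  have "i_separated p q ?j" using j tr unfolding i_separated_def by blast
  then have kj: "?k \<le> ?j" using sepL_props(3)[OF ex j(1)] by blast
  show ?thesis
  proof (cases "i_below p' q' ?j")
    case True
    then have "pv n p' q' = ?j" using ex' unfolding pv_def by simp
    then show ?thesis using k kj by simp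
  next
    case False
    then have qb: "i_below q' p' ?j" using j(2) unfolding i_separated_def by blast
    have ex2: "\<exists>i\<in>{1..n}. i_separated q' p' i" using ex' sep_sym by blast
    have "sepL n q' p' = ?j" using sepL_sym by metis
    then have pvj: "pv n q' p' = ?j" using ex2 qb unfolding pv_def by simp
    have "?k \<noteq> ?j"
    proof
      assume "?k = ?j"
      then have "i_below q p ?k" using qb tr j(1) by auto
      then show False using below_both_False[OF gp gq k1 kb] by blast
    qed
    then show ?thesis using pvj k kj by simp
  qed
qed

lemma pv_cong:
  assumes "\<And>i. i \<in> {1..n} \<Longrightarrow> i_below p q i = i_below p' q' i \<and> i_below q p i = i_below q' p' i"
  shows "pv n p q = pv n p' q'"
proof -
  have e: "\<And>i. (i \<in> {1..n} \<and> i_separated p q i) = (i \<in> {1..n} \<and> i_separated p' q' i)"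
    using assms unfolding i_separated_def by blast
  have ex: "(\<exists>i\<in>{1..n}. i_separated p q i) = (\<exists>i\<in>{1..n}. i_separated p' q' i)" using e by blast
  have L: "sepL n p q = sepL n p' q'" unfolding sepL_def using e by simp
  show ?thesis
  proof (cases "\<exists>i\<in>{1..n}. i_separated p q i")
    case True
    have "sepL n p q \<in> {1..n}" using sepL_props(1)[OF True] .
    then have "i_below p q (sepL n p q) = i_below p' q' (sepL n p' q')" using assms L by simp
    then show ?thesis using True ex L unfolding pv_def by simp
  next
    case False then show ?thesis using ex unfolding pv_def by simp
  qed
qed

lemma no_incr_cycle:
  fixes f :: "nat \<Rightarrow> real"
  assumes "m > 0" "\<forall>j<m. f j < f ((j+1) mod m)"
  shows False
proof -
  have fin: "finite (f ` {..<m})" "f ` {..<m} \<noteq> {}" using assms(1) by auto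
  obtain j0 where j0: "j0 < m" "f j0 = Max (f ` {..<m})" using Max_in[OF fin] by auto
  have "(j0+1) mod m < m" using assms(1) by simp
  then have "f ((j0+1) mod m) \<le> f j0" using j0 fin(1) by (simp add: Max_ge)
  then show False using assms(2) j0(1) by fastforce
qed

lemma in_image:
  assumes g: "\<And>i. i \<in> {1..n} \<Longrightarrow> fst q i > 0"
    and inside: "\<And>i. i \<in> {1..n} \<Longrightarrow> snd q i < P i \<and> P i < cube_w q i"
    and out: "\<And>i. i \<notin> {1..n} \<Longrightarrow> P i = 0"
  shows "P \<in> cube_image n q"
proof -
  define x where "x = (\<lambda>i. if i \<in> {1..n} then (P i - snd q i) / fst q i else 0)"
  have "x \<in> open_unit_cube n"
    unfolding open_unit_cube_def
  proof (intro CollectI conjI ballI allI impI)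
    fix i assume i: "i \<in> {1..n}"
    have u: "fst q i > 0" using g i .
    show "0 < x i" using inside[OF i] i u by (simp add: x_def)
    show "x i < 1" using inside[OF i] i u by (simp add: x_def cube_w_def divide_less_eq)
  next
    fix i assume "i \<notin> {1..n}" then show "x i = 0" unfolding x_def by auto
  qed
  moreover have "cube_map n q x = P"
  proof
    fix i show "cube_map n q x i = P i"
    proof (cases "i \<in> {1..n}")
      case True
      have u: "fst q i > 0" using g True .
      then show ?thesis using True by (simp add: cube_map_def x_def)
    next
      case False then show ?thesis using out[OF False] False unfolding cube_map_def by auto
    qed
  qed
  ultimately show ?thesis unfolding cube_image_def by (metis image_eqI)
qed

lemma lc_sep:
  assumes "little_cubes n A c" "a \<in> A" "b \<in> A" "a \<noteq> b"
  shows "\<exists>i\<in>{1..n}. i_separated (c a) (c b) i"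
proof (rule ccontr)
  assume "\<not> ?thesis"
  then have ns: "\<And>i. i \<in> {1..n} \<Longrightarrow> snd (c b) i < cube_w (c a) i \<and> snd (c a) i < cube_w (c b) i"
    unfolding i_separated_def i_below_def by force
  have ga: "\<And>i. i \<in> {1..n} \<Longrightarrow> fst (c a) i > 0" and gb: "\<And>i. i \<in> {1..n} \<Longrightarrow> fst (c b) i > 0"
    using assms(1-3) unfolding little_cubes_def by auto
  define P where "P = (\<lambda>i. if i \<in> {1..n} then (max (snd (c a) i) (snd (c b) i) + min (cube_w (c a) i) (cube_w (c b) i)) / 2 else (0::real))"
  have Pa: "snd (c a) i < P i \<and> P i < cube_w (c a) i" if "i \<in> {1..n}" for i
    using ns[OF that] ga[OF that] gb[OF that] that unfolding P_def cube_w_def by auto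
  have Pb: "snd (c b) i < P i \<and> P i < cube_w (c b) i" if "i \<in> {1..n}" for i
    using ns[OF that] ga[OF that] gb[OF that] that unfolding P_def cube_w_def by auto
  have out: "P i = 0" if "i \<notin> {1..n}" for i using that unfolding P_def by auto
  have "P \<in> cube_image n (c a)" using in_image[OF ga Pa out] by blast
  moreover have "P \<in> cube_image n (c b)" using in_image[OF gb Pb out] by blast
  moreover have "cube_image n (c a) \<inter> cube_image n (c b) = {}"
    using assms unfolding little_cubes_def by blast
  ultimately show False by blast
qed

lemma unit_bounds:
  fixes u v :: real
  assumes u: "u > 0" and h: "\<And>t. 0 < t \<Longrightarrow> t < 1 \<Longrightarrow> 0 < u*t + v \<and> u*t + v < 1"
  shows "0 \<le> v \<and> u + v \<le> 1"
proof (rule conjI; rule ccontr)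
  assume nv: "\<not> 0 \<le> v"
  define t where "t = min (1/2) (-v/(2*u))"
  have "0 < -v/(2*u)" using nv u by (intro divide_pos_pos) auto
  then have t: "0 < t" "t < 1" by (auto simp: t_def)
  have "t \<le> -v/(2*u)" by (simp add: t_def)
  then have "u*t \<le> u*(-v/(2*u))" using u by (intro mult_left_mono) auto
  also have "\<dots> = -v/2" using u by simp
  moreover have "0 < u*t + v" using h[OF t] by blast
  ultimately show False using nv by linarith
next
  assume nv: "\<not> u + v \<le> 1"
  define t where "t = max (1/2) (1 - (u+v-1)/(2*u))"
  have t: "0 < t" "t < 1" using nv u by (auto simp: t_def)
  have "1 - (u+v-1)/(2*u) \<le> t" by (simp add: t_def)
  then have "u*(1 - (u+v-1)/(2*u)) \<le> u*t" using u by (intro mult_left_mono) auto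
  moreover have "u*(1 - (u+v-1)/(2*u)) = u - (u+v-1)/2" using u by (simp add: field_simps)
  ultimately have "u - (u+v-1)/2 \<le> u*t" by simp
  moreover have "u*t + v < 1" using h[OF t] by blast
  ultimately show False using nv by (simp add: field_simps)
qed

lemma lc_bounds:
  assumes "little_cubes n B d" "b \<in> B" "i \<in> {1..n}"
  shows "0 \<le> snd (d b) i \<and> cube_w (d b) i \<le> 1"
proof -
  have u: "fst (d b) i > 0" and sub: "cube_image n (d b) \<subseteq> open_unit_cube n"
    using assms unfolding little_cubes_def by auto
  have "0 < fst (d b) i * t + snd (d b) i \<and> fst (d b) i * t + snd (d b) i < 1"
    if t: "0 < t" "t < 1" for t
  proof -
    define x where "x = (\<lambda>j. if j \<in> {1..n} then (if j = i then t else 1/2) else (0::real))"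
    have "x \<in> open_unit_cube n" unfolding open_unit_cube_def x_def using t by auto
    then have "cube_map n (d b) x \<in> open_unit_cube n" using sub unfolding cube_image_def by blast
    then have "0 < cube_map n (d b) x i \<and> cube_map n (d b) x i < 1"
      using assms(3) unfolding open_unit_cube_def by blast
    then show ?thesis using assms(3) by (simp add: cube_map_def x_def mult.commute)
  qed
  then show ?thesis using unit_bounds[OF u] by (simp add: cube_w_def)
qed

lemma comp_inside:
  assumes "fst p i > 0" "0 \<le> snd q i" "cube_w q i \<le> 1"
  shows "snd p i \<le> snd (cube_compose p q) i" "cube_w (cube_compose p q) i \<le> cube_w p i"
proof -
  show "snd p i \<le> snd (cube_compose p q) i"
    using assms by (simp add: cube_compose_def)
  have "fst p i * cube_w q i \<le> fst p i * 1" using assms by (intro mult_left_mono) auto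
  then show "cube_w (cube_compose p q) i \<le> cube_w p i"
    by (simp add: cube_compose_def cube_w_def algebra_simps)
qed

lemma comp_below_iff:
  assumes "fst p i > 0"
  shows "i_below (cube_compose p q) (cube_compose p r) i = i_below q r i"
proof -
  have "i_below (cube_compose p q) (cube_compose p r) i \<longleftrightarrow> fst p i * cube_w q i \<le> fst p i * snd r i"
    by (simp add: i_below_def cube_compose_def cube_w_def algebra_simps)
  also have "\<dots> \<longleftrightarrow> cube_w q i \<le> snd r i" using assms by simp
  finally show ?thesis by (simp add: i_below_def)
qed

lemma lc_good: "little_cubes n A c \<Longrightarrow> a \<in> A \<Longrightarrow> good n (c a)"
  unfolding little_cubes_def good_def by auto

lemma good_comp: "good n p \<Longrightarrow> good n q \<Longrightarrow> good n (cube_compose p q)"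
  unfolding good_def cube_compose_def by auto


lemma part1:
  assumes lA: "little_cubes n A c"
  shows "graph_ext n A (phi n A c)"
  unfolding graph_ext_def
proof
  show "wcd_graph n A (phi n A c)"
    unfolding wcd_graph_def
  proof (intro conjI allI impI ballI)
    fix x y assume "x \<notin> A \<or> y \<notin> A \<or> x = y"
    then show "phi n A c x y = 0" by (auto simp: phi_pv)
  next
    fix x y assume xy: "x \<in> A" "y \<in> A" "x \<noteq> y"
    have g: "good n (c x)" "good n (c y)" using lc_good[OF lA] xy by auto
    have ex: "\<exists>i\<in>{1..n}. i_separated (c x) (c y) i" using lc_sep[OF lA xy] .
    show "(phi n A c x y \<noteq> 0 \<and> phi n A c y x = 0) \<or> (phi n A c x y = 0 \<and> phi n A c y x \<noteq> 0)"
      using pv_one(1)[OF g ex] xy by (simp add: phi_pv)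
    show "phi n A c x y \<le> n" using pv_one(2)[OF g ex] xy by (simp add: phi_pv)
  qed
next
  show "\<not> has_uniform_cycle A (phi n A c)"
  proof
    assume "has_uniform_cycle A (phi n A c)"
    then obtain xs i where xs: "xs \<noteq> []" "i \<ge> 1" "set xs \<subseteq> A"
      and cyc: "\<forall>j < length xs. phi n A c (xs ! j) (xs ! ((j + 1) mod length xs)) = i"
      unfolding has_uniform_cycle_def by blast
    let ?m = "length xs"
    have m: "?m > 0" using xs(1) by simp
    have "\<forall>j<?m. snd (c (xs ! j)) i < snd (c (xs ! ((j+1) mod ?m))) i"
    proof (intro allI impI)
      fix j assume j: "j < ?m"
      let ?x = "xs ! j" let ?y = "xs ! ((j+1) mod ?m)"
      have e: "phi n A c ?x ?y = i" using cyc j by blast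
      then have nz: "phi n A c ?x ?y \<noteq> 0" using xs(2) by simp
      then have xy: "?x \<in> A" "?y \<in> A" "?x \<noteq> ?y" by (auto simp: phi_pv split: if_splits)
      have pnz: "pv n (c ?x) (c ?y) \<noteq> 0" using nz xy by (simp add: phi_pv)
      have pe: "pv n (c ?x) (c ?y) = i" using e xy by (simp add: phi_pv)
      note P = pv_nz[OF pnz]
      have i1: "i \<in> {1..n}" using sepL_props(1)[OF P(1)] P(2) pe by simp
      have b: "i_below (c ?x) (c ?y) i" using P(2,3) pe by simp
      have "fst (c ?x) i > 0" using lc_good[OF lA xy(1)] i1 by (simp add: good_def)
      then show "snd (c ?x) i < snd (c ?y) i" using b by (simp add: i_below_def cube_w_def)
    qed
    then show False using no_incr_cycle[OF m, of "\<lambda>j. snd (c (xs ! j)) i"] by blast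
  qed
qed

lemma part2:
  assumes lA: "little_cubes n A c" and lB: "little_cubes n B d" and aA: "a \<in> A"
  shows "graph_le (phi n (subst_index A a B) (cubes_comp a c d))
                 (graph_comp a (phi n A c) (phi n B d))"
  unfolding graph_le_def
proof (intro allI impI)
  fix x y assume nz: "phi n (subst_index A a B) (cubes_comp a c d) x y \<noteq> 0"
  then have xy: "x \<in> subst_index A a B" "y \<in> subst_index A a B" "x \<noteq> y"
    by (auto simp: phi_pv split: if_splits)
  have nzp: "pv n (cubes_comp a c d x) (cubes_comp a c d y) \<noteq> 0"
    using nz xy by (simp add: phi_pv)
  have ua: "\<And>i. i \<in> {1..n} \<Longrightarrow> fst (c a) i > 0" using lc_good[OF lA aA] by (simp add: good_def)
  have ga: "good n (c a)" using lc_good[OF lA aA] .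
  show "phi n (subst_index A a B) (cubes_comp a c d) x y \<le> graph_comp a (phi n A c) (phi n B d) x y \<or>
        phi n (subst_index A a B) (cubes_comp a c d) x y < graph_comp a (phi n A c) (phi n B d) y x"
  proof (cases x)
    case (Inl x1)
    then have x1: "x1 \<in> A" "x1 \<noteq> a" using xy(1) by (auto simp: subst_index_def)
    have gx: "good n (c x1)" using lc_good[OF lA x1(1)] .
    show ?thesis
    proof (cases y)
      case (Inl y1)
      then have y1: "y1 \<in> A" "y1 \<noteq> a" using xy(2) by (auto simp: subst_index_def)
      show ?thesis using Inl \<open>x = Inl x1\<close> x1 y1 xy
        by (simp add: phi_pv cubes_comp_def graph_comp_def)
    next
      case (Inr y1)
      then have y1: "y1 \<in> B" using xy(2) by (auto simp: subst_index_def)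
      let ?q = "cube_compose (c a) (d y1)"
      have gq: "good n ?q" using good_comp[OF ga lc_good[OF lB y1]] .
      have ex': "\<exists>i\<in>{1..n}. i_separated (c x1) (c a) i" using lc_sep[OF lA x1(1) aA x1(2)] .
      have tr: "(i_below (c x1) (c a) i \<longrightarrow> i_below (c x1) ?q i) \<and> (i_below (c a) (c x1) i \<longrightarrow> i_below ?q (c x1) i)"
        if i: "i \<in> {1..n}" for i
      proof -
        note b = lc_bounds[OF lB y1 i]
        note ci = comp_inside[OF ua[OF i] conjunct1[OF b] conjunct2[OF b]]
        show ?thesis using ci unfolding i_below_def by auto
      qed
      have nz2: "pv n (c x1) ?q \<noteq> 0" using nzp Inl Inr \<open>x = Inl x1\<close> by (simp add: cubes_comp_def)
      have L: "pv n (c x1) ?q \<le> pv n (c x1) (c a) \<or> pv n (c x1) ?q < pv n (c a) (c x1)"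
        using pv_lax[OF gx gq ex' tr nz2] by blast
      show ?thesis using L Inr \<open>x = Inl x1\<close> x1 y1 xy aA
        by (simp add: phi_pv cubes_comp_def graph_comp_def)
    qed
  next
    case (Inr x1)
    then have x1: "x1 \<in> B" using xy(1) by (auto simp: subst_index_def)
    let ?p = "cube_compose (c a) (d x1)"
    have gp: "good n ?p" using good_comp[OF ga lc_good[OF lB x1]] .
    show ?thesis
    proof (cases y)
      case (Inl y1)
      then have y1: "y1 \<in> A" "y1 \<noteq> a" using xy(2) by (auto simp: subst_index_def)
      have gy: "good n (c y1)" using lc_good[OF lA y1(1)] .
      have ex': "\<exists>i\<in>{1..n}. i_separated (c a) (c y1) i" using lc_sep[OF lA aA y1(1)] y1(2) by metis
      have tr: "(i_below (c a) (c y1) i \<longrightarrow> i_below ?p (c y1) i) \<and> (i_below (c y1) (c a) i \<longrightarrow> i_below (c y1) ?p i)"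
        if i: "i \<in> {1..n}" for i
      proof -
        note b = lc_bounds[OF lB x1 i]
        note ci = comp_inside[OF ua[OF i] conjunct1[OF b] conjunct2[OF b]]
        show ?thesis using ci unfolding i_below_def by auto
      qed
      have nz2: "pv n ?p (c y1) \<noteq> 0" using nzp Inl Inr by (simp add: cubes_comp_def)
      have L: "pv n ?p (c y1) \<le> pv n (c a) (c y1) \<or> pv n ?p (c y1) < pv n (c y1) (c a)"
        using pv_lax[OF gp gy ex' tr nz2] by blast
      show ?thesis using L Inr Inl x1 y1 xy aA
        by (simp add: phi_pv cubes_comp_def graph_comp_def)
    next
      case (Inr y1)
      then have y1: "y1 \<in> B" using xy(2) by (auto simp: subst_index_def)
      have "x1 \<noteq> y1" using xy(3) Inr \<open>x = Inr x1\<close> by simp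
      have "pv n ?p (cube_compose (c a) (d y1)) = pv n (d x1) (d y1)"
        by (rule pv_cong) (simp add: comp_below_iff[OF ua])
      then show ?thesis using Inr \<open>x = Inr x1\<close> x1 y1 \<open>x1 \<noteq> y1\<close>
        by (simp add: phi_pv cubes_comp_def graph_comp_def)
    qed
  qed
qed

lemma part3:
  assumes "bij_betw f A A'"
  shows "phi n A' (relabel_cubes f A c) = relabel_graph f A (phi n A c)"
proof (intro ext)
  fix x y
  have fA: "f ` A = A'" using assms by (simp add: bij_betw_def)
  show "phi n A' (relabel_cubes f A c) x y = relabel_graph f A (phi n A c) x y"
  proof (cases "x \<in> A' \<and> y \<in> A'")
    case True
    have i: "inv_into A f x \<in> A" "inv_into A f y \<in> A" using True fA by (auto intro: inv_into_into)
    have "inv_into A f x = inv_into A f y \<longleftrightarrow> x = y" using True fA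
      by (metis f_inv_into_f)
    then show ?thesis using True fA i by (simp add: phi_pv relabel_cubes_def relabel_graph_def)
  next
    case False
    then show ?thesis using fA by (auto simp: phi_pv relabel_cubes_def relabel_graph_def)
  qed
qed

theorem mainTheorem5:
  fixes n :: nat
  assumes "n \<ge> 1"
  shows
    "(\<forall>(A :: 'a set) c. finite A \<and> little_cubes n A c \<longrightarrow> graph_ext n A (phi n A c)) \<and>
     (\<forall>(A :: 'a set) (B :: 'b set) c d a.
        finite A \<and> finite B \<and> little_cubes n A c \<and> little_cubes n B d \<and> a \<in> A \<longrightarrow>
        graph_le (phi n (subst_index A a B) (cubes_comp a c d))
                 (graph_comp a (phi n A c) (phi n B d))) \<and>
     (\<forall>(A :: 'a set) (A' :: 'c set) f c.
        finite A \<and> bij_betw f A A' \<and> little_cubes n A c \<longrightarrow>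
        phi n A' (relabel_cubes f A c) = relabel_graph f A (phi n A c))"
proof (intro conjI allI impI)
  fix A :: "'a set" and c assume "finite A \<and> little_cubes n A c"
  then show "graph_ext n A (phi n A c)" by (intro part1) simp
next
  fix A :: "'a set" and B :: "'b set" and c d a
  assume "finite A \<and> finite B \<and> little_cubes n A c \<and> little_cubes n B d \<and> a \<in> A"
  then show "graph_le (phi n (subst_index A a B) (cubes_comp a c d))
                 (graph_comp a (phi n A c) (phi n B d))" by (intro part2) simp_all
next
  fix A :: "'a set" and A' :: "'c set" and f c
  assume "finite A \<and> bij_betw f A A' \<and> little_cubes n A c"
  then show "phi n A' (relabel_cubes f A c) = relabel_graph f A (phi n A c)" by (intro part3) simp
qed

end
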